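(* Let $n\ge 2$, $K_n=(V,E)$ the complete graph, and $M_1,M_2$ matchings in $K_n$. If the graph $(V, M_1\triangle M_2)$ has a single non-trivial connected component (a component with more than one node), then $\bm{c}=\chi(M_1)-\chi(M_2)$ is a circuit of the Matching polytope $P_{\mathrm{match}}(n)=\operatorname{conv}\{\chi(M): M\text{ a matching in }K_n\}$, with circuits taken with respect to the linear description $$\bm{x}(E[S])\le (|S|-1)/2 \ \text{for all } S\subseteq V,\ |S| \text{ odd},\ |S|\ge 3;\quad \bm{x}(\delta(v))\le 1\ \text{for all } v\in V;\quad \bm{x}\ge \bm{0}.$$
   Context: $\chi(M)\in\{0,1\}^E$ is the characteristic vector of $M$; $\triangle$ is symmetric difference; $E[S]$ is the set of edges with both endpoints in $S$, $\delta(v)$ the set of edges incident to $v$, $\bm{x}(F)=\sum_{e\in F}x_e$. Circuits: for a polytope $P=\{\bm{x}: B\bm{x}\le \bm{d}\}$ given by a fixed linear system, a nonzero vector $\bm{g}$ is a circuit of $P$ if $\operatorname{supp}(B\bm{g})$ is inclusion-minimal among the sets $\operatorname{supp}(B\bm{y})$ with $\bm{y}\neq\bm{0}$. *)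

theory Defs
  imports "HOL-Analysis.Analysis"
begin

definition Kverts :: "nat \<Rightarrow> nat set" where
  "Kverts n = {..<n}"

definition Kedges :: "nat \<Rightarrow> nat set set" where
  "Kedges n = {e. \<exists>u v. u < n \<and> v < n \<and> u \<noteq> v \<and> e = {u, v}}"

definition is_matching :: "nat \<Rightarrow> nat set set \<Rightarrow> bool" where
  "is_matching n M \<longleftrightarrow> M \<subseteq> Kedges n \<and>
     (\<forall>e\<in>M. \<forall>f\<in>M. e \<noteq> f \<longrightarrow> e \<inter> f = {})"

definition chi :: "nat set set \<Rightarrow> nat set \<Rightarrow> real" where
  "chi M e = (if e \<in> M then 1 else 0)"

definition inner_edges :: "nat \<Rightarrow> nat set \<Rightarrow> nat set set" where
  "inner_edges n S = {e \<in> Kedges n. e \<subseteq> S}"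

definition delta :: "nat \<Rightarrow> nat \<Rightarrow> nat set set" where
  "delta n v = {e \<in> Kedges n. v \<in> e}"

text \<open>Vectors in R^E: real functions on edges vanishing outside E.\<close>
definition edge_vecs :: "nat \<Rightarrow> (nat set \<Rightarrow> real) set" where
  "edge_vecs n = {x. \<forall>e. e \<notin> Kedges n \<longrightarrow> x e = 0}"

text \<open>Rows of the linear description B x \<le> d of the matching polytope.\<close>
datatype row = OddSetRow "nat set" | DegRow nat | NonnegRow "nat set"

definition match_rows :: "nat \<Rightarrow> row set" where
  "match_rows n =
     {OddSetRow S | S. S \<subseteq> Kverts n \<and> odd (card S) \<and> card S \<ge> 3}
     \<union> {DegRow v | v. v \<in> Kverts n}
     \<union> {NonnegRow e | e. e \<in> Kedges n}"

text \<open>The row r of B applied to x  (nonnegativity x_e \<ge> 0 written as -x_e \<le> 0).\<close>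
fun Bmul :: "nat \<Rightarrow> (nat set \<Rightarrow> real) \<Rightarrow> row \<Rightarrow> real" where
  "Bmul n x (OddSetRow S) = sum x (inner_edges n S)"
| "Bmul n x (DegRow v) = sum x (delta n v)"
| "Bmul n x (NonnegRow e) = - x e"

fun rhs :: "row \<Rightarrow> real" where
  "rhs (OddSetRow S) = (real (card S) - 1) / 2"
| "rhs (DegRow v) = 1"
| "rhs (NonnegRow e) = 0"

definition supp_B :: "nat \<Rightarrow> (nat set \<Rightarrow> real) \<Rightarrow> row set" where
  "supp_B n y = {r \<in> match_rows n. Bmul n y r \<noteq> 0}"

definition is_circuit :: "nat \<Rightarrow> (nat set \<Rightarrow> real) \<Rightarrow> bool" where
  "is_circuit n g \<longleftrightarrow> g \<in> edge_vecs n \<and> g \<noteq> (\<lambda>_. 0) \<and>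
     (\<forall>y \<in> edge_vecs n. y \<noteq> (\<lambda>_. 0) \<longrightarrow> \<not> (supp_B n y \<subset> supp_B n g))"

definition reach :: "nat set set \<Rightarrow> nat \<Rightarrow> nat \<Rightarrow> bool" where
  "reach F = (\<lambda>u v. {u, v} \<in> F)\<^sup>*\<^sup>*"

definition components :: "nat \<Rightarrow> nat set set \<Rightarrow> nat set set" where
  "components n F = {{w \<in> Kverts n. reach F u w} | u. u \<in> Kverts n}"

definition nontrivial_components :: "nat \<Rightarrow> nat set set \<Rightarrow> nat set set" where
  "nontrivial_components n F = {C \<in> components n F. card C > 1}"

end

theory Submission
  imports Defs
begin

lemma finite_Kedges: "finite (Kedges n)"
proof -
  have "Kedges n \<subseteq> Pow {..<n}" by (auto simp: Kedges_def)
  then show ?thesis by (rule finite_subset) simp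
qed

lemma Bmul_scale: "Bmul n (\<lambda>e. t * g e) r = t * Bmul n g r"
  by (cases r) (auto simp: sum_distrib_left)

theorem corollary1:
  fixes n :: nat and M1 M2 :: "nat set set"
  assumes "n \<ge> 2"
    and "is_matching n M1" and "is_matching n M2"
    and "\<exists>C. nontrivial_components n (M1 - M2 \<union> (M2 - M1)) = {C}"
  shows "is_circuit n (\<lambda>e. chi M1 e - chi M2 e)"
proof -
  define D where "D = M1 - M2 \<union> (M2 - M1)"
  define g where "g = (\<lambda>e. chi M1 e - chi M2 e)"
  obtain C where C: "nontrivial_components n D = {C}" using assms(4) D_def by auto
  have M1E: "M1 \<subseteq> Kedges n" and M2E: "M2 \<subseteq> Kedges n"
    using assms(2,3) by (auto simp: is_matching_def)
  have M1d: "\<And>e f. e \<in> M1 \<Longrightarrow> f \<in> M1 \<Longrightarrow> e \<noteq> f \<Longrightarrow> e \<inter> f = {}"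
    using assms(2) by (auto simp: is_matching_def)
  have M2d: "\<And>e f. e \<in> M2 \<Longrightarrow> f \<in> M2 \<Longrightarrow> e \<noteq> f \<Longrightarrow> e \<inter> f = {}"
    using assms(3) by (auto simp: is_matching_def)
  have DE: "D \<subseteq> Kedges n" using M1E M2E by (auto simp: D_def)
  have gD: "\<And>e. e \<notin> D \<Longrightarrow> g e = 0" by (auto simp: g_def chi_def D_def)
  have gD1: "\<And>e. e \<in> D \<Longrightarrow> g e \<noteq> 0" by (auto simp: g_def chi_def D_def)
  have gE: "g \<in> edge_vecs n" using DE gD by (auto simp: edge_vecs_def)
  have Kv: "\<And>e v. e \<in> D \<Longrightarrow> v \<in> e \<Longrightarrow> v < n" using DE by (auto simp: Kedges_def)
  have comp: "{w \<in> Kverts n. reach D p w} = C" if pq: "{p,q} \<in> D" "p \<noteq> q" for p q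
  proof -
    let ?K = "{w \<in> Kverts n. reach D p w}"
    have pn: "p < n" "q < n" using Kv pq by auto
    have "reach D p p" by (simp add: reach_def)
    moreover have "reach D p q" using pq(1) unfolding reach_def by (rule r_into_rtranclp)
    ultimately have sub: "{p,q} \<subseteq> ?K" using pn by (auto simp: Kverts_def)
    have "finite ?K" by (auto simp: Kverts_def)
    then have "card {p,q} \<le> card ?K" using sub card_mono by blast
    then have "card ?K > 1" using pq(2) by simp
    moreover have "?K \<in> components n D" using pn by (auto simp: components_def Kverts_def)
    ultimately have "?K \<in> nontrivial_components n D" by (simp add: nontrivial_components_def)
    then show ?thesis using C by simp
  qed
  have local: "sum x (delta n v) = x e + x f \<and> g e + g f = 0"
    if "e \<in> D" "f \<in> D" "e \<noteq> f" "v \<in> e" "v \<in> f" "\<forall>h. h \<notin> D \<longrightarrow> x h = 0" for e f v x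
  proof -
    have ef: "(e \<in> M1 - M2 \<and> f \<in> M2 - M1) \<or> (e \<in> M2 - M1 \<and> f \<in> M1 - M2)"
      using that M1d[of e f] M2d[of e f] by (auto simp: D_def)
    have dD: "delta n v \<inter> D = {e,f}"
    proof
      show "delta n v \<inter> D \<subseteq> {e,f}"
      proof
        fix h assume h: "h \<in> delta n v \<inter> D"
        then have "v \<in> h" "h \<in> D" by (auto simp: delta_def)
        then have vh: "v \<in> h" and hD: "h \<in> D" .
        have hM: "h \<in> M1 \<or> h \<in> M2" using hD by (auto simp: D_def)
        show "h \<in> {e,f}"
        proof (rule ccontr)
          assume nh: "h \<notin> {e,f}"
          then have he: "h \<noteq> e" and hf: "h \<noteq> f" by auto
          from ef hM show False
          proof (elim disjE conjE)
            assume "e \<in> M1 - M2" "h \<in> M1"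
            then show False using M1d[of h e] he vh that(4) by blast
          next
            assume "f \<in> M2 - M1" "h \<in> M2"
            then show False using M2d[of h f] hf vh that(5) by blast
          next
            assume "f \<in> M1 - M2" "h \<in> M1"
            then show False using M1d[of h f] hf vh that(5) by blast
          next
            assume "e \<in> M2 - M1" "h \<in> M2"
            then show False using M2d[of h e] he vh that(4) by blast
          qed
        qed
      qed
      show "{e,f} \<subseteq> delta n v \<inter> D" using that DE by (auto simp: delta_def)
    qed
    have "sum x (delta n v) = sum x (delta n v \<inter> D)"
    proof (rule sum.mono_neutral_right)
      show "finite (delta n v)" using finite_Kedges by (rule finite_subset[rotated]) (auto simp: delta_def)
    qed (use that(6) in auto)
    also have "\<dots> = x e + x f" using dD that(3) by simp
    finally show ?thesis using ef by (auto simp: g_def chi_def)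
  qed
  have gne: "g \<noteq> (\<lambda>_. 0)" and "D \<noteq> {}"
  proof -
    have "C \<in> nontrivial_components n D" using C by simp
    then obtain c where cC: "C = {w \<in> Kverts n. reach D c w}" and cn: "c \<in> Kverts n" and card: "card C > 1"
      by (auto simp: nontrivial_components_def components_def)
    have "c \<in> C" using cC cn by (simp add: reach_def)
    have "\<exists>w\<in>C. w \<noteq> c"
    proof (rule ccontr)
      assume "\<not> (\<exists>w\<in>C. w \<noteq> c)"
      then have "C \<subseteq> {c}" by auto
      then have "card C \<le> card {c}" by (intro card_mono) auto
      then show False using card by simp
    qed
    then obtain w where "w \<in> C" "w \<noteq> c" by auto
    then have "reach D c w" "c \<noteq> w" using cC by auto
    then obtain z where "{c,z} \<in> D" unfolding reach_def
      by (auto elim: converse_rtranclpE)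
    then show "D \<noteq> {}" by auto
    then obtain e1 where "e1 \<in> D" by auto
    then have "g e1 \<noteq> 0" by (rule gD1)
    then show "g \<noteq> (\<lambda>_. 0)" by (metis)
  qed
  then obtain e0 where e0: "e0 \<in> D" by auto
  then obtain a b where ab: "e0 = {a,b}" "a \<noteq> b" using DE by (auto simp: Kedges_def)
  show ?thesis unfolding g_def[symmetric] is_circuit_def
  proof (intro conjI gE gne ballI impI notI)
    fix y assume yE: "y \<in> edge_vecs n" and yne: "y \<noteq> (\<lambda>_. 0)"
      and ss: "supp_B n y \<subset> supp_B n g"
    have yD: "\<forall>h. h \<notin> D \<longrightarrow> y h = 0"
    proof (intro allI impI)
      fix h assume h: "h \<notin> D"
      show "y h = 0"
      proof (cases "h \<in> Kedges n")
        case True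
        then have "NonnegRow h \<in> match_rows n" by (auto simp: match_rows_def)
        moreover have "NonnegRow h \<notin> supp_B n g" using gD[OF h] by (simp add: supp_B_def)
        ultimately show ?thesis using ss by (auto simp: supp_B_def)
      next
        case False then show ?thesis using yE by (auto simp: edge_vecs_def)
      qed
    qed
    have yloc: "y e + y f = 0" if "e \<in> D" "f \<in> D" "e \<noteq> f" "v \<in> e" "v \<in> f" for e f v
    proof -
      have "v < n" using Kv that by auto
      then have "DegRow v \<in> match_rows n" by (auto simp: match_rows_def Kverts_def)
      moreover have "DegRow v \<notin> supp_B n g"
        using local[OF that, of g] gD by (simp add: supp_B_def)
      ultimately have "sum y (delta n v) = 0" using ss by (auto simp: supp_B_def)
      then show ?thesis using local[OF that, of y] yD by simp
    qed
    define t where "t = y e0 / g e0"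
    have P0: "y e0 = t * g e0" using gD1[OF e0] by (simp add: t_def)
    have propag: "y f = t * g f" if "e \<in> D" "f \<in> D" "e \<noteq> f" "v \<in> e" "v \<in> f" "y e = t * g e" for e f v
    proof -
      have "y f = - y e" using yloc[OF that(1-5)] by simp
      moreover have "g f = - g e" using local[OF that(1-5), of y] yD by simp
      ultimately show ?thesis using that(6) by simp
    qed
    have Q: "\<forall>f\<in>D. w \<in> f \<longrightarrow> y f = t * g f" if "reach D a w" for w
      using that unfolding reach_def
    proof (induction rule: rtranclp_induct)
      case base
      show ?case
      proof (intro ballI impI)
        fix f assume "f \<in> D" "a \<in> f"
        then show "y f = t * g f" using P0 propag[of e0 f a] e0 ab by (cases "f = e0") auto
      qed
    next
      case (step w w')
      have Pw: "y {w,w'} = t * g {w,w'}" using step by auto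
      show ?case
      proof (intro ballI impI)
        fix f assume "f \<in> D" "w' \<in> f"
        then show "y f = t * g f" using Pw propag[of "{w,w'}" f w'] step(2) by (cases "f = {w,w'}") auto
      qed
    qed
    have all: "y f = t * g f" if fD: "f \<in> D" for f
    proof -
      have "f \<in> Kedges n" using fD DE by auto
      then obtain p q where pq: "f = {p,q}" "p \<noteq> q" by (auto simp: Kedges_def)
      have "p \<in> {w \<in> Kverts n. reach D p w}" using Kv[OF that] pq by (auto simp: Kverts_def reach_def)
      moreover have "{w \<in> Kverts n. reach D p w} = {w \<in> Kverts n. reach D a w}"
        using comp[of p q] comp[of a b] pq ab e0 that by simp
      ultimately have "p \<in> {w \<in> Kverts n. reach D a w}" by simp
      then have "reach D a p" by simp
      then show ?thesis using Q that pq by auto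
    qed
    have yeq: "y = (\<lambda>e. t * g e)"
    proof
      fix e show "y e = t * g e" using all yD gD by (cases "e \<in> D") auto
    qed
    have "t \<noteq> 0" using yne yeq by auto
    then have "supp_B n y = supp_B n g" unfolding yeq supp_B_def Bmul_scale by simp
    then show False using ss by simp
  qed
qed

end
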